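(* Let $k\ge1$. The Hamming weight enumerator of the linear simplex $\alpha$ code $\mathcal{S}_k^{\alpha}$ (of length $q^{sk}$) is $$W_{\mathcal{S}_k^{\alpha}}(X,Y)=\sum_{j=0}^{s-1}A_{w_j}X^{q^{sk}-w_j}Y^{w_j}+X^{q^{sk}},$$ where $w_j=q^{sk}-q^{s(k-1)+j}$ and $A_{w_j}=q^{k(s-j)}-q^{k((s-j)-1)}$.
   Context: Let $R$ be a finite commutative chain ring: a finite commutative ring with $1\neq0$ whose ideals form a single chain under inclusion. Its unique maximal ideal is principal, generated by some $\gamma$; let $s\ge1$ be the least integer with $\gamma^s=0$ (nilpotency index). The residue field $R/\langle\gamma\rangle$ is isomorphic to $\mathbb{F}_q$, $q$ a prime power. Fix a set $T=\{e_0,\dots,e_{q-1}\}\subseteq R$ of coset representatives of $R/\langle\gamma\rangle$ with $e_0=0$, $e_1=1$, totally ordered by $e_0<e_1<\dots<e_{q-1}$. Every $r\in R$ has a unique representation $r=\sum_{i=0}^{s-1}r_i\gamma^i$ with $r_i\in T$. Order $R$ by: $x>y$ iff $x_i>y_i$ in $T$ for the largest index $i$ with $x_i\neq y_i$ (where $x_i,y_i$ are the digits of $x,y$). List $R=\{\rho_0,\rho_1,\dots,\rho_{q^s-1}\}$ in increasing order (so $\rho_0=0,\rho_1=1$). For $a\in R$ and $m\ge1$, $\mathbf{a}^{(m)}$ denotes the constant vector $(a,\dots,a)\in R^m$. Define matrices $G_k^\alpha$ recursively: $G_1^\alpha=(\rho_0\ \rho_1\ \cdots\ \rho_{q^s-1})$,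 and for $k>1$, $G_k^\alpha$ is the $k\times q^{sk}$ matrix consisting of $q^s$ column blocks, where the $j$-th block ($j=0,\dots,q^s-1$) has first row $\boldsymbol{\rho_j}^{(q^{s(k-1)})}$ and, below it, a copy of $G_{k-1}^\alpha$. The linear simplex $\alpha$ code $\mathcal{S}_k^\alpha$ is the $R$-submodule of $R^{q^{sk}}$ generated by the rows of $G_k^\alpha$. The Hamming weight of $x\in R^n$ is the number of nonzero coordinates; the Hamming weight enumerator of a code $\mathcal{C}$ of length $n$ is $\sum_i A_iX^{n-i}Y^i$ where $A_i$ is the number of codewords of Hamming weight $i$. *)

theory Defs
  imports Complex_Main
begin

definition is_ideal :: "'a::comm_ring_1 set \<Rightarrow> bool" where
  "is_ideal I \<longleftrightarrow> 0 \<in> I \<and> (\<forall>x\<in>I. \<forall>y\<in>I. x + y \<in> I) \<and> (\<forall>r x. x \<in> I \<longrightarrow> r * x \<in> I)"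

definition maximal_ideal :: "'a::comm_ring_1 set \<Rightarrow> bool" where
  "maximal_ideal M \<longleftrightarrow> is_ideal M \<and> M \<noteq> UNIV \<and>
     (\<forall>J. is_ideal J \<and> M \<subseteq> J \<longrightarrow> J = M \<or> J = UNIV)"

definition pideal :: "'a::comm_ring_1 \<Rightarrow> 'a set" where
  "pideal g = {r * g | r. True}"

definition digits :: "'a::comm_ring_1 list \<Rightarrow> 'a \<Rightarrow> nat \<Rightarrow> 'a \<Rightarrow> nat \<Rightarrow> 'a" where
  "digits T g s r = (THE d. (\<forall>i<s. d i \<in> set T) \<and> (\<forall>i\<ge>s. d i = 0) \<and>
                            r = (\<Sum>i<s. d i * g ^ i))"

text \<open>Position of an element of T in the total order e_0 < e_1 < ... < e_{q-1}.\<close>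
definition tidx :: "'a list \<Rightarrow> 'a \<Rightarrow> nat" where
  "tidx T t = (THE n. n < length T \<and> T ! n = t)"

definition rless :: "'a::comm_ring_1 list \<Rightarrow> 'a \<Rightarrow> nat \<Rightarrow> 'a \<Rightarrow> 'a \<Rightarrow> bool" where
  "rless T g s x y \<longleftrightarrow> (\<exists>i<s. tidx T (digits T g s x i) < tidx T (digits T g s y i) \<and>
       (\<forall>j. i < j \<and> j < s \<longrightarrow> digits T g s x j = digits T g s y j))"

definition rho :: "'a::{comm_ring_1,finite} list \<Rightarrow> 'a \<Rightarrow> nat \<Rightarrow> nat \<Rightarrow> 'a" where
  "rho T g s j = (THE x. card {y. rless T g s y x} = j)"

text \<open>G_k^alpha as a function (row index, column index); N = q^s = |R|.
  Argument k is the number of rows; k = 0 is a dummy case.\<close>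
fun Gmat :: "(nat \<Rightarrow> 'a::zero) \<Rightarrow> nat \<Rightarrow> nat \<Rightarrow> nat \<Rightarrow> nat \<Rightarrow> 'a" where
  "Gmat r N 0 i c = 0"
| "Gmat r N (Suc 0) i c = r c"
| "Gmat r N (Suc (Suc k)) i c =
     (if i = 0 then r (c div N ^ Suc k) else Gmat r N (Suc k) (i - 1) (c mod N ^ Suc k))"

definition row_code :: "nat \<Rightarrow> nat \<Rightarrow> (nat \<Rightarrow> nat \<Rightarrow> 'a::comm_ring_1) \<Rightarrow> 'a list set" where
  "row_code k n M = {map (\<lambda>c. \<Sum>i<k. a i * M i c) [0..<n] | a. True}"

definition simplex_alpha_code :: "'a::{comm_ring_1,finite} list \<Rightarrow> 'a \<Rightarrow> nat \<Rightarrow> nat \<Rightarrow> 'a list set" where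
  "simplex_alpha_code T g s k =
     row_code k ((length T) ^ (s * k)) (Gmat (rho T g s) ((length T) ^ s) k)"

definition hamming_wt :: "'a::zero list \<Rightarrow> nat" where
  "hamming_wt x = length (filter (\<lambda>a. a \<noteq> 0) x)"

definition wt_count :: "'a::zero list set \<Rightarrow> nat \<Rightarrow> nat" where
  "wt_count C i = card {c \<in> C. hamming_wt c = i}"

definition weight_enumerator :: "'a::zero list set \<Rightarrow> nat \<Rightarrow> real \<Rightarrow> real \<Rightarrow> real" where
  "weight_enumerator C n X Y = (\<Sum>i\<le>n. real (wt_count C i) * X ^ (n - i) * Y ^ i)"

end

theory Submission imports Defs "HOL-Library.FuncSet" begin


lemma pideal_ideal: "is_ideal (pideal (r::'a::comm_ring_1))"
  unfolding is_ideal_def pideal_def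
proof (intro conjI ballI allI impI)
  show "0 \<in> {x * r |x. True}" by (auto intro: exI[of _ 0])
next
  fix x y assume "x \<in> {x * r |x. True}" "y \<in> {x * r |x. True}"
  then obtain a b where "x = a * r" "y = b * r" by auto
  then show "x + y \<in> {x * r |x. True}" by (auto simp: distrib_right intro: exI[of _ "a+b"])
next
  fix x y assume "x \<in> {x * r |x. True}"
  then obtain a where "x = a * r" by auto
  then show "y * x \<in> {x * r |x. True}" by (auto simp: mult.assoc intro: exI[of _ "y*a"])
qed

lemma sum_split_shift: "(\<Sum>i<j+n. f i) = (\<Sum>i<j. f i) + (\<Sum>i<n. f (i + j)) " for f :: "nat \<Rightarrow> 'b::comm_monoid_add"
  by (induct n) (auto simp: add.commute add.left_commute)

lemma card_fin_funs:
  "card {d::nat\<Rightarrow>'b. (\<forall>i<n. d i \<in> A i) \<and> (\<forall>i\<ge>n. d i = z)} = (\<Prod>i<n. card (A i))"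
proof -
  define g where "g = (\<lambda>f::nat\<Rightarrow>'b. \<lambda>i. if i < n then f i else z)"
  have inj: "inj_on g (PiE {..<n} A)"
  proof
    fix f f' assume f: "f \<in> PiE {..<n} A" "f' \<in> PiE {..<n} A" "g f = g f'"
    show "f = f'"
    proof (rule PiE_ext[OF f(1,2)])
      fix i assume "i \<in> {..<n}"
      then show "f i = f' i" using fun_cong[OF f(3), of i] by (simp add: g_def)
    qed
  qed
  have img: "{d::nat\<Rightarrow>'b. (\<forall>i<n. d i \<in> A i) \<and> (\<forall>i\<ge>n. d i = z)} = g ` PiE {..<n} A"
  proof (intro equalityI subsetI)
    fix d assume d: "d \<in> {d::nat\<Rightarrow>'b. (\<forall>i<n. d i \<in> A i) \<and> (\<forall>i\<ge>n. d i = z)}"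
    have "d = g (restrict d {..<n})" using d by (auto simp: g_def fun_eq_iff)
    moreover have "restrict d {..<n} \<in> PiE {..<n} A" using d by auto
    ultimately show "d \<in> g ` PiE {..<n} A" by blast
  next
    fix d assume "d \<in> g ` PiE {..<n} A"
    then obtain f where f: "f \<in> PiE {..<n} A" "d = g f" by blast
    have "\<forall>i<n. d i \<in> A i" using f by (simp add: g_def PiE_iff)
    moreover have "\<forall>i\<ge>n. d i = z" using f by (simp add: g_def)
    ultimately show "d \<in> {d::nat\<Rightarrow>'b. (\<forall>i<n. d i \<in> A i) \<and> (\<forall>i\<ge>n. d i = z)}"
      by blast
  qed
  show ?thesis unfolding img card_image[OF inj] by (simp add: card_PiE)
qed

lemma prod_if_pow: "(\<Prod>i<n. (if i < j then 1 else q)) = (q::nat) ^ (n - j)"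
  by (induct n) (auto simp: Suc_diff_le)

lemma rank_bij:
  fixes lt :: "'b::finite \<Rightarrow> 'b \<Rightarrow> bool"
  assumes irr: "\<And>x. \<not> lt x x" and tr: "\<And>x y z. lt x y \<Longrightarrow> lt y z \<Longrightarrow> lt x z"
    and tot: "\<And>x y. x \<noteq> y \<Longrightarrow> lt x y \<or> lt y x"
  shows "bij_betw (\<lambda>x. card {y. lt y x}) UNIV {..<card (UNIV::'b set)}"
proof -
  let ?r = "\<lambda>x. card {y. lt y x}"
  have mono: "?r x < ?r y" if "lt x y" for x y
  proof (rule psubset_card_mono)
    show "finite {z. lt z y}" by simp
    show "{z. lt z x} \<subset> {z. lt z y}" using that tr irr by blast
  qed
  have inj: "inj_on ?r UNIV"
  proof
    fix x y assume "?r x = ?r y"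
    then show "x = y" using mono tot by (metis less_irrefl)
  qed
  have sub: "?r ` UNIV \<subseteq> {..<card (UNIV::'b set)}"
  proof
    fix n assume "n \<in> ?r ` UNIV"
    then obtain x where x: "n = ?r x" by blast
    have "{y. lt y x} \<subset> UNIV" using irr by blast
    then have "?r x < card (UNIV::'b set)" by (rule psubset_card_mono[rotated]) simp
    then show "n \<in> {..<card (UNIV::'b set)}" using x by simp
  qed
  have "card (?r ` UNIV) = card {..<card (UNIV::'b set)}" using card_image[OF inj] by simp
  then have "?r ` UNIV = {..<card (UNIV::'b set)}" using sub by (intro card_subset_eq) auto
  then show ?thesis using inj by (simp add: bij_betw_def)
qed

locale cr =
  fixes \<gamma> :: "'a::{comm_ring_1,finite}" and s :: nat and T :: "'a list"
  assumes chain: "\<And>I J :: 'a set. is_ideal I \<Longrightarrow> is_ideal J \<Longrightarrow> I \<subseteq> J \<or> J \<subseteq> I"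
    and maxid: "maximal_ideal (pideal \<gamma>)"
    and nilp1: "\<gamma> ^ s = 0" and nilp2: "\<forall>n<s. \<gamma> ^ n \<noteq> 0"
    and T_dist: "distinct T"
    and T_reps: "\<forall>r::'a. \<exists>!t. t \<in> set T \<and> r - t \<in> pideal \<gamma>"
    and T0: "T ! 0 = 0"
begin

abbreviation "M \<equiv> pideal \<gamma>"

lemma inM: "x \<in> M \<longleftrightarrow> (\<exists>y. x = y * \<gamma>)"
  unfolding pideal_def by auto

lemma M_ideal: "is_ideal M" using maxid unfolding maximal_ideal_def by auto

lemma zero_M: "0 \<in> M" by (auto simp: inM intro: exI[of _ 0])

lemma M_mult: "x \<in> M \<Longrightarrow> y * x \<in> M"
proof -
  assume "x \<in> M"
  then obtain a where "x = a * \<gamma>" by (auto simp: inM)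
  then show ?thesis by (auto simp: inM mult.assoc intro: exI[of _ "y*a"])
qed

lemma M_add: "x \<in> M \<Longrightarrow> y \<in> M \<Longrightarrow> x + y \<in> M"
proof -
  assume "x \<in> M" "y \<in> M"
  then obtain a b where "x = a * \<gamma>" "y = b * \<gamma>" by (auto simp: inM)
  then show ?thesis by (auto simp: inM distrib_right intro: exI[of _ "a+b"])
qed

lemma M_diff: "x \<in> M \<Longrightarrow> y \<in> M \<Longrightarrow> x - y \<in> M"
proof -
  assume "x \<in> M" "y \<in> M"
  then obtain a b where "x = a * \<gamma>" "y = b * \<gamma>" by (auto simp: inM)
  then show ?thesis by (auto simp: inM left_diff_distrib intro: exI[of _ "a-b"])
qed

lemma one_notin: "1 \<notin> M"
proof
  assume "1 \<in> M"
  then have "\<forall>r. r \<in> M" using M_mult[of 1] by (metis mult.right_neutral)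
  then show False using maxid unfolding maximal_ideal_def by auto
qed

lemma unit: assumes "x \<notin> M" shows "\<exists>v. x * v = 1"
proof -
  have "pideal x \<subseteq> M \<or> M \<subseteq> pideal x" using chain[OF pideal_ideal M_ideal] .
  moreover have "x \<in> pideal x" unfolding pideal_def by (auto intro: exI[of _ 1])
  ultimately have "M \<subseteq> pideal x" using assms by auto
  then have "pideal x = M \<or> pideal x = UNIV" using maxid pideal_ideal unfolding maximal_ideal_def by blast
  then have "pideal x = UNIV" using \<open>x \<in> pideal x\<close> assms by auto
  then have "1 \<in> pideal x" by auto
  then show ?thesis unfolding pideal_def by (auto simp: mult.commute)
qed

lemma unit_notin: "x * v = 1 \<Longrightarrow> x \<notin> M"
  using M_mult[of x v] one_notin by (auto simp: mult.commute)

lemma unit_add: "x \<notin> M \<Longrightarrow> m \<in> M \<Longrightarrow> x + m \<notin> M"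
  using M_diff[of "x+m" m] by auto

lemma rep: "\<exists>t\<in>set T. r - t \<in> M" using T_reps by blast

lemma T_M: "t \<in> set T \<Longrightarrow> t' \<in> set T \<Longrightarrow> t - t' \<in> M \<Longrightarrow> t = t'"
  using T_reps zero_M by (metis diff_self)

lemma len_T: "length T \<ge> 2"
proof -
  obtain a where a: "a \<in> set T" "0 - a \<in> M" using rep by blast
  obtain b where b: "b \<in> set T" "1 - b \<in> M" using rep by blast
  have "a \<noteq> b"
  proof
    assume "a = b"
    then have "(1 - b) - (0 - a) \<in> M" using a b M_diff by blast
    then show False using one_notin \<open>a = b\<close> by simp
  qed
  then have "card {a,b} \<le> card (set T)" using a b by (intro card_mono) auto
  then have "card (set T) \<ge> 2" using \<open>a \<noteq> b\<close> by simp
  then show ?thesis using distinct_card T_dist by metis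
qed

lemma zero_T: "0 \<in> set T" using T0 len_T by (metis nth_mem less_le_trans zero_less_numeral)

lemma T_inM: "t \<in> set T \<Longrightarrow> t \<in> M \<Longrightarrow> t = 0"
  using T_M[of t 0] zero_T by simp

lemma s_pos: "s \<ge> 1" using nilp1 by (cases s) auto


lemma gpow_zero: "i \<ge> s \<Longrightarrow> \<gamma> ^ i = 0"
  using nilp1 by (metis le_add_diff_inverse mult_zero_left power_add)

definition dset :: "(nat \<Rightarrow> 'a) set" where
  "dset = {d. (\<forall>i<s. d i \<in> set T) \<and> (\<forall>i\<ge>s. d i = 0)}"

definition val :: "(nat \<Rightarrow> 'a) \<Rightarrow> 'a" where
  "val d = (\<Sum>i<s. d i * \<gamma> ^ i)"

lemma exist_aux:
  "\<exists>d. (\<forall>i<n. d i \<in> set T) \<and> (\<forall>i\<ge>n. d i = 0) \<and> (\<exists>z. r = (\<Sum>i<n. d i * \<gamma>^i) + \<gamma>^n * z)"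
proof (induct n arbitrary: r)
  case 0
  show ?case by (rule exI[of _ "\<lambda>_. 0"]) auto
next
  case (Suc n)
  obtain t where t: "t \<in> set T" "r - t \<in> M" using rep by blast
  then obtain y where y: "r - t = y * \<gamma>" by (auto simp: inM)
  obtain d' z where d': "\<forall>i<n. d' i \<in> set T" "\<forall>i\<ge>n. d' i = 0" "y = (\<Sum>i<n. d' i * \<gamma>^i) + \<gamma>^n * z"
    using Suc[of y] by blast
  define d where "d = (\<lambda>i. if i = 0 then t else d' (i - 1))"
  have "(\<Sum>i<Suc n. d i * \<gamma>^i) = t + (\<Sum>i<n. d' i * \<gamma>^i) * \<gamma>"
    unfolding sum.lessThan_Suc_shift by (simp add: d_def sum_distrib_left sum_distrib_right mult_ac)
  then have "r = (\<Sum>i<Suc n. d i * \<gamma>^i) + \<gamma>^Suc n * z"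
    using y d'(3) by (simp add: algebra_simps)
  moreover have "\<forall>i<Suc n. d i \<in> set T" using t d' by (auto simp: d_def)
  moreover have "\<forall>i\<ge>Suc n. d i = 0" using d' by (auto simp: d_def)
  ultimately show ?case by blast
qed

lemma val_surj: "\<exists>d\<in>dset. r = val d"
  using exist_aux[of s r] by (auto simp: dset_def val_def nilp1)

lemma uniq_aux:
  "a + n \<le> s \<Longrightarrow> (\<forall>i<n. c i = 0 \<or> c i \<notin> M) \<Longrightarrow> \<gamma>^a * (\<Sum>i<n. c i * \<gamma>^i) = 0 \<Longrightarrow> \<forall>i<n. c i = 0"
proof (induct n arbitrary: a c)
  case 0
  then show ?case by simp
next
  case (Suc n)
  define S where "S = (\<Sum>i<n. c (Suc i) * \<gamma>^i)"
  have sum: "(\<Sum>i<Suc n. c i * \<gamma>^i) = c 0 + \<gamma> * S"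
    unfolding sum.lessThan_Suc_shift S_def by (simp add: sum_distrib_left mult_ac)
  have "\<gamma> * S \<in> M" by (auto simp: inM mult.commute)
  have c0: "c 0 = 0"
  proof (rule ccontr)
    assume "c 0 \<noteq> 0"
    then have "c 0 \<notin> M" using Suc.prems(2) by auto
    then have "c 0 + \<gamma> * S \<notin> M" using unit_add \<open>\<gamma> * S \<in> M\<close> by blast
    then obtain v where v: "(c 0 + \<gamma> * S) * v = 1" using unit by blast
    have "\<gamma>^a = \<gamma>^a * ((c 0 + \<gamma> * S) * v)" using v by simp
    also have "\<dots> = 0" using Suc.prems(3) sum by (simp add: mult.assoc[symmetric])
    finally show False using nilp2 Suc.prems(1) by auto
  qed
  have "\<gamma>^(Suc a) * S = 0" using Suc.prems(3) sum c0 by (simp add: mult_ac)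
  moreover have "Suc a + n \<le> s" using Suc.prems(1) by simp
  moreover have "\<forall>i<n. c (Suc i) = 0 \<or> c (Suc i) \<notin> M" using Suc.prems(2) by auto
  ultimately have "\<forall>i<n. c (Suc i) = 0"
    using Suc.hyps[of "Suc a" "\<lambda>i. c (Suc i)"] unfolding S_def by blast
  then show ?case using c0 by (metis less_Suc_eq_0_disj)
qed

lemma val_inj: "d \<in> dset \<Longrightarrow> e \<in> dset \<Longrightarrow> val d = val e \<Longrightarrow> d = e"
proof -
  assume d: "d \<in> dset" and e: "e \<in> dset" and eq: "val d = val e"
  define c where "c = (\<lambda>i. d i - e i)"
  have h1: "\<forall>i<s. c i = 0 \<or> c i \<notin> M"
    using d e T_M unfolding c_def dset_def by auto
  have h2: "\<gamma>^0 * (\<Sum>i<s. c i * \<gamma>^i) = 0"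
    using eq unfolding c_def val_def by (simp add: left_diff_distrib sum_subtractf)
  have h0: "0 + s \<le> s" by simp
  have "\<forall>i<s. c i = 0" using uniq_aux[OF h0 h1 h2] .
  show "d = e"
  proof
    fix i show "d i = e i"
    proof (cases "i < s")
      case True
      then show ?thesis using \<open>\<forall>i<s. c i = 0\<close> unfolding c_def by simp
    next
      case False
      then show ?thesis using d e unfolding dset_def by simp
    qed
  qed
qed

abbreviation dg :: "'a \<Rightarrow> nat \<Rightarrow> 'a" where "dg r \<equiv> digits T \<gamma> s r"

lemma ex1_dg: "\<exists>!d. (\<forall>i<s. d i \<in> set T) \<and> (\<forall>i\<ge>s. d i = 0) \<and> r = (\<Sum>i<s. d i * \<gamma> ^ i)"
  using val_surj[of r] val_inj unfolding dset_def val_def by blast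

lemma dg: "dg r \<in> dset" "val (dg r) = r"
  using theI'[OF ex1_dg[of r]] unfolding digits_def dset_def val_def by auto

lemma dg_val: "d \<in> dset \<Longrightarrow> dg (val d) = d"
  using dg[of "val d"] val_inj by blast


abbreviation q :: nat where "q \<equiv> length T"

lemma val_ext: "n \<ge> s \<Longrightarrow> (\<Sum>i<n. d i * \<gamma>^i) = val d"
proof -
  assume n: "n \<ge> s"
  have "(\<Sum>i<n. d i * \<gamma>^i) = (\<Sum>i<s + (n - s). d i * \<gamma>^i)" using n by simp
  also have "\<dots> = val d + (\<Sum>i<n - s. d (i + s) * \<gamma>^(i + s))"
    unfolding sum_split_shift val_def ..
  also have "(\<Sum>i<n - s. d (i + s) * \<gamma>^(i + s)) = 0"
    by (intro sum.neutral) (simp add: gpow_zero)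
  finally show ?thesis by simp
qed

definition shl :: "nat \<Rightarrow> (nat \<Rightarrow> 'a) \<Rightarrow> nat \<Rightarrow> 'a" where
  "shl j d i = (if j \<le> i \<and> i < s then d (i - j) else 0)"

definition ushl :: "nat \<Rightarrow> (nat \<Rightarrow> 'a) \<Rightarrow> nat \<Rightarrow> 'a" where
  "ushl j d i = (if i + j < s then d (i + j) else 0)"

lemma val_shl: "val (shl j d) = \<gamma>^j * val d"
proof -
  have "val (shl j d) = (\<Sum>i<j + s. shl j d i * \<gamma>^i)" using val_ext[of "j+s"] by simp
  also have "\<dots> = (\<Sum>i<j. shl j d i * \<gamma>^i) + (\<Sum>i<s. shl j d (i + j) * \<gamma>^(i + j))"
    unfolding sum_split_shift ..
  also have "(\<Sum>i<j. shl j d i * \<gamma>^i) = 0" by (intro sum.neutral) (simp add: shl_def)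
  also have "(\<Sum>i<s. shl j d (i + j) * \<gamma>^(i + j)) = (\<Sum>i<s. \<gamma>^j * (d i * \<gamma>^i))"
  proof (intro sum.cong refl)
    fix i assume "i \<in> {..<s}"
    show "shl j d (i + j) * \<gamma>^(i + j) = \<gamma>^j * (d i * \<gamma>^i)"
    proof (cases "i + j < s")
      case True
      then show ?thesis by (simp add: shl_def power_add mult_ac)
    next
      case False
      then have "\<gamma>^(i+j) = 0" by (simp add: gpow_zero)
      then show ?thesis by (simp add: power_add mult_ac)
    qed
  qed
  finally show ?thesis by (simp add: val_def sum_distrib_left)
qed

lemma shl_dset: "d \<in> dset \<Longrightarrow> shl j d \<in> dset"
  using zero_T unfolding dset_def shl_def by auto

lemma ushl_dset: "d \<in> dset \<Longrightarrow> ushl j d \<in> dset"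
  using zero_T unfolding dset_def ushl_def by auto

lemma shl_ushl: "d \<in> dset \<Longrightarrow> \<forall>i<j. d i = 0 \<Longrightarrow> shl j (ushl j d) = d"
  unfolding dset_def shl_def ushl_def by (auto simp: fun_eq_iff)

definition I :: "nat \<Rightarrow> 'a set" where "I j = {r. \<forall>i<j. dg r i = 0}"

lemma dg_mult: "dg (\<gamma>^j * y) = shl j (dg y)"
  using dg_val[OF shl_dset[OF dg(1)], of j y] val_shl[of j "dg y"] dg(2)[of y] by simp

lemma I_iff: "r \<in> I j \<longleftrightarrow> (\<exists>y. r = \<gamma>^j * y)"
proof
  assume "r \<in> I j"
  then have "\<forall>i<j. dg r i = 0" by (simp add: I_def)
  then have "dg r = shl j (ushl j (dg r))" using shl_ushl[OF dg(1)] by simp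
  then have "r = \<gamma>^j * val (ushl j (dg r))" using dg(2)[of r] val_shl by metis
  then show "\<exists>y. r = \<gamma>^j * y" by blast
next
  assume "\<exists>y. r = \<gamma>^j * y"
  then obtain y where "r = \<gamma>^j * y" by blast
  then show "r \<in> I j" unfolding I_def using dg_mult by (auto simp: shl_def)
qed

lemma dg_zero: "dg 0 = (\<lambda>_. 0)"
proof -
  have "(\<lambda>_. 0) \<in> dset" using zero_T by (simp add: dset_def)
  moreover have "val (\<lambda>_. 0) = 0" by (simp add: val_def)
  ultimately show ?thesis using dg_val by metis
qed

lemma ann: "j \<le> s \<Longrightarrow> (\<gamma>^j * y = 0 \<longleftrightarrow> y \<in> I (s - j))"
proof -
  assume j: "j \<le> s"
  have "\<gamma>^j * y = 0 \<longleftrightarrow> dg (\<gamma>^j * y) = dg 0"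
    by (metis dg(2))
  also have "\<dots> \<longleftrightarrow> shl j (dg y) = (\<lambda>_. 0)" by (simp add: dg_mult dg_zero)
  also have "\<dots> \<longleftrightarrow> (\<forall>i<s - j. dg y i = 0)"
  proof
    assume h: "shl j (dg y) = (\<lambda>_. 0)"
    show "\<forall>i<s - j. dg y i = 0"
    proof (intro allI impI)
      fix i assume "i < s - j"
      then show "dg y i = 0" using fun_cong[OF h, of "i + j"] by (simp add: shl_def less_diff_conv)
    qed
  next
    assume h: "\<forall>i<s - j. dg y i = 0"
    show "shl j (dg y) = (\<lambda>_. 0)"
    proof
      fix i show "shl j (dg y) i = 0" using h by (simp add: shl_def less_diff_conv2)
    qed
  qed
  finally show ?thesis by (simp add: I_def)
qed

lemma card_T: "card (set T) = q" using distinct_card T_dist by blast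

lemma card_I: "j \<le> s \<Longrightarrow> card (I j) = q ^ (s - j)"
proof -
  assume j: "j \<le> s"
  define D where "D = {d. (\<forall>i<s. d i \<in> (if i < j then {0} else set T)) \<and> (\<forall>i\<ge>s. d i = 0)}"
  have "D \<subseteq> dset" using zero_T by (auto simp: D_def dset_def split: if_splits)
  then have inj: "inj_on val D" using val_inj by (meson inj_onI subsetD)
  have "I j = val ` D"
  proof (intro equalityI subsetI)
    fix r assume "r \<in> I j"
    then have "dg r \<in> D" using dg(1)[of r] by (auto simp: I_def D_def dset_def)
    then show "r \<in> val ` D" using dg(2)[of r] by (metis image_eqI)
  next
    fix r assume "r \<in> val ` D"
    then obtain d where d: "d \<in> D" "r = val d" by blast
    then have "dg r = d" using dg_val \<open>D \<subseteq> dset\<close> by blast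
    have "\<forall>i<j. d i = 0"
    proof (intro allI impI)
      fix i assume "i < j"
      then have "i < s" using j by simp
      then show "d i = 0" using d(1) \<open>i < j\<close> by (auto simp: D_def)
    qed
    then show "r \<in> I j" using d \<open>dg r = d\<close> by (auto simp: I_def)
  qed
  then have "card (I j) = card D" using card_image[OF inj] by simp
  also have "\<dots> = (\<Prod>i<s. card (if i < j then {0::'a} else set T))"
    unfolding D_def by (rule card_fin_funs)
  also have "\<dots> = (\<Prod>i<s. (if i < j then 1 else q))"
    by (intro prod.cong refl) (simp add: card_T)
  finally show ?thesis by (simp add: prod_if_pow)
qed

lemma I_0: "I 0 = UNIV" by (simp add: I_def)

lemma card_UNIV: "card (UNIV :: 'a set) = q ^ s"
  using card_I[of 0] by (simp add: I_0)

lemma I_s: "I s = {0}"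
proof -
  have "0 = \<gamma>^s * 0" by simp
  then have "0 \<in> I s" using I_iff[of 0 s] by blast
  moreover have "card (I s) = 1" using card_I[of s] by simp
  ultimately show ?thesis by (metis card_1_singletonE singletonD)
qed

lemma I_mono: "j \<le> j' \<Longrightarrow> I j' \<subseteq> I j" by (auto simp: I_def)

lemma I_unit: "r \<in> I j \<Longrightarrow> r \<notin> I (Suc j) \<Longrightarrow> \<exists>u v. r = \<gamma>^j * u \<and> u * v = 1"
proof -
  assume a: "r \<in> I j" "r \<notin> I (Suc j)"
  then obtain u where u: "r = \<gamma>^j * u" using I_iff by blast
  have "u \<notin> M"
  proof
    assume "u \<in> M"
    then obtain z where "u = z * \<gamma>" by (auto simp: inM)
    then have "r = \<gamma>^Suc j * z" using u by (simp add: mult_ac)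
    then show False using a(2) I_iff by blast
  qed
  then show ?thesis using unit u by blast
qed

lemma I_add: "x \<in> I j \<Longrightarrow> y \<in> I j \<Longrightarrow> x + y \<in> I j"
  using I_iff by (metis distrib_left)


lemma tidx: "t \<in> set T \<Longrightarrow> tidx T t < q \<and> T ! tidx T t = t"
proof -
  assume t: "t \<in> set T"
  have "\<exists>!n. n < q \<and> T ! n = t"
  proof -
    obtain n where "n < q" "T ! n = t" using t by (auto simp: in_set_conv_nth)
    moreover have "\<And>m. m < q \<Longrightarrow> T ! m = t \<Longrightarrow> m = n"
      using calculation T_dist nth_eq_iff_index_eq by metis
    ultimately show ?thesis by blast
  qed
  then show ?thesis unfolding tidx_def by (rule theI')
qed

lemma tidx_inj: "t \<in> set T \<Longrightarrow> t' \<in> set T \<Longrightarrow> tidx T t = tidx T t' \<Longrightarrow> t = t'"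
  using tidx by metis

abbreviation lt :: "'a \<Rightarrow> 'a \<Rightarrow> bool" where "lt x y \<equiv> rless T \<gamma> s x y"

lemma lt_irr: "\<not> lt x x" by (simp add: rless_def)

lemma lt_trans: "lt x y \<Longrightarrow> lt y z \<Longrightarrow> lt x z"
proof -
  assume "lt x y" "lt y z"
  then obtain i i' where i: "i < s" "tidx T (dg x i) < tidx T (dg y i)"
      "\<forall>j. i < j \<and> j < s \<longrightarrow> dg x j = dg y j"
    and i': "i' < s" "tidx T (dg y i') < tidx T (dg z i')"
      "\<forall>j. i' < j \<and> j < s \<longrightarrow> dg y j = dg z j"
    unfolding rless_def by blast
  consider "i = i'" | "i < i'" | "i' < i" by linarith
  then show "lt x z"
  proof cases
    case 1
    then show ?thesis using i i' unfolding rless_def by (metis less_trans)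
  next
    case 2
    then have "dg x i' = dg y i'" using i i' by blast
    then show ?thesis using i i' 2 unfolding rless_def by (metis less_trans)
  next
    case 3
    then have "dg y i = dg z i" using i i' by blast
    then show ?thesis using i i' 3 unfolding rless_def by (metis less_trans)
  qed
qed

lemma lt_tot: "x \<noteq> y \<Longrightarrow> lt x y \<or> lt y x"
proof -
  assume xy: "x \<noteq> y"
  define D where "D = {i. i < s \<and> dg x i \<noteq> dg y i}"
  have "dg x \<noteq> dg y" using xy dg(2) by metis
  then obtain i where "dg x i \<noteq> dg y i" by auto
  moreover have "\<not> i \<ge> s"
  proof
    assume "i \<ge> s"
    then have "dg x i = 0" "dg y i = 0" using dg(1)[of x] dg(1)[of y] unfolding dset_def by auto
    then show False using calculation by simp
  qed
  ultimately have "i \<in> D" unfolding D_def by simp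
  then have ne: "D \<noteq> {}" by blast
  have fin: "finite D" unfolding D_def by simp
  define m where "m = Max D"
  have m: "m \<in> D" using Max_in[OF fin ne] m_def by simp
  have above: "\<forall>j. m < j \<and> j < s \<longrightarrow> dg x j = dg y j"
    using Max_ge[OF fin] m_def unfolding D_def by (metis (mono_tags, lifting) mem_Collect_eq not_le)
  have inT: "dg x m \<in> set T" "dg y m \<in> set T" using m dg(1)[of x] dg(1)[of y] unfolding D_def dset_def by auto
  have "tidx T (dg x m) \<noteq> tidx T (dg y m)" using tidx_inj[OF inT] m unfolding D_def by auto
  then have "tidx T (dg x m) < tidx T (dg y m) \<or> tidx T (dg y m) < tidx T (dg x m)" by linarith
  moreover have "m < s" using m unfolding D_def by simp
  ultimately show ?thesis using above unfolding rless_def by (metis)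
qed

abbreviation rk :: "'a \<Rightarrow> nat" where "rk x \<equiv> card {y. lt y x}"
abbreviation N :: nat where "N \<equiv> q ^ s"

lemma rk_bij: "bij_betw rk UNIV {..<N}"
  using rank_bij[of lt, OF lt_irr lt_trans lt_tot] card_UNIV by simp

lemma rho_rk: "j < N \<Longrightarrow> rk (rho T \<gamma> s j) = j"
proof -
  assume j: "j < N"
  have "j \<in> rk ` UNIV" using rk_bij j unfolding bij_betw_def by simp
  then obtain x where "rk x = j" by blast
  moreover have "\<And>y. rk y = j \<Longrightarrow> y = x"
    using rk_bij calculation unfolding bij_betw_def inj_on_def by blast
  ultimately have "\<exists>!x. rk x = j" by blast
  then show ?thesis unfolding rho_def by (rule theI')
qed

lemma rho_inj: "inj_on (rho T \<gamma> s) {..<N}"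
  using rho_rk by (metis inj_onI lessThan_iff)

lemma rho_surj: "rho T \<gamma> s ` {..<N} = UNIV"
proof -
  have "x \<in> rho T \<gamma> s ` {..<N}" for x
  proof -
    have r: "rk x < N" using rk_bij unfolding bij_betw_def by auto
    have "rk (rho T \<gamma> s (rk x)) = rk x" using rho_rk[OF r] .
    then have "rho T \<gamma> s (rk x) = x" using rk_bij unfolding bij_betw_def inj_on_def by blast
    then show ?thesis using r by force
  qed
  then show ?thesis by blast
qed

end


lemma mod_div_digit:
  assumes "e < (a::nat)" "N > 0"
  shows "(c mod N^a) div N^e mod N = c div N^e mod (N::nat)"
proof -
  have "N^a = N^e * N^(a-e)" using assms by (simp add: power_add[symmetric])
  then have "c mod N^a = N^e * (c div N^e mod N^(a-e)) + c mod N^e" by (simp add: mod_mult2_eq)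
  then have "(c mod N^a) div N^e = c div N^e mod N^(a-e)" using assms by simp
  moreover have "N dvd N^(a-e)" using assms by (simp add: dvd_power)
  ultimately show ?thesis by (simp add: mod_mod_cancel)
qed

lemma Gmat_col:
  "N > 0 \<Longrightarrow> i < k \<Longrightarrow> c < N^k \<Longrightarrow> Gmat r N k i c = r (c div N^(k-1-i) mod N)"
proof (induct k arbitrary: i c)
  case 0
  then show ?case by simp
next
  case (Suc k)
  show ?case
  proof (cases k)
    case 0
    then show ?thesis using Suc.prems by simp
  next
    case (Suc k')
    show ?thesis
    proof (cases "i = 0")
      case True
      have "c div N^(Suc k') < N" using Suc.prems \<open>k = Suc k'\<close>
        by (simp add: div_less_iff_less_mult mult.commute)
      then show ?thesis using True \<open>k = Suc k'\<close> by simp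
    next
      case False
      have "Gmat r N (Suc k) i c = Gmat r N k (i - 1) (c mod N ^ k)"
        using False \<open>k = Suc k'\<close> by simp
      also have "\<dots> = r ((c mod N ^ k) div N^(k - 1 - (i - 1)) mod N)"
        using Suc.hyps[of "i - 1" "c mod N ^ k"] Suc.prems False by simp
      also have "(c mod N ^ k) div N^(k - 1 - (i - 1)) mod N = c div N^(k - 1 - (i - 1)) mod N"
        using Suc.prems False by (intro mod_div_digit) auto
      finally show ?thesis using False by simp
    qed
  qed
qed

lemma base_inj:
  "N > 0 \<Longrightarrow> c < N^k \<Longrightarrow> c' < N^k \<Longrightarrow> (\<forall>m<k. c div N^m mod N = c' div N^m mod (N::nat)) \<Longrightarrow> c = c'"
proof (induct k arbitrary: c c')
  case 0
  then show ?case by simp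
next
  case (Suc k)
  have "c mod N = c' mod N" using Suc.prems(4)[rule_format, of 0] by simp
  moreover have "c div N = c' div N"
  proof (rule Suc.hyps)
    show "c div N < N^k" "c' div N < N^k" using Suc.prems
      by (simp_all add: div_less_iff_less_mult mult.commute)
    show "\<forall>m<k. c div N div N ^ m mod N = c' div N div N ^ m mod N"
      using Suc.prems(4) by (simp add: div_mult2_eq[symmetric] power_Suc[symmetric] del: power_Suc)
  qed (use Suc.prems in auto)
  ultimately show ?case by (metis div_mult_mod_eq)
qed

lemma bij_card_filter: "bij_betw f A B \<Longrightarrow> card {a\<in>A. P (f a)} = card {b\<in>B. P b}"
proof -
  assume b: "bij_betw f A B"
  have "inj_on f {a\<in>A. P (f a)}" using b unfolding bij_betw_def by (auto intro: inj_on_subset)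
  moreover have "f ` {a\<in>A. P (f a)} = {b\<in>B. P b}" using b unfolding bij_betw_def by auto
  ultimately show ?thesis by (metis card_image)
qed

context cr begin

abbreviation Ak :: "nat \<Rightarrow> (nat \<Rightarrow> 'a) set" where "Ak k \<equiv> PiE {..<k} (\<lambda>_. UNIV)"

definition col :: "nat \<Rightarrow> nat \<Rightarrow> nat \<Rightarrow> 'a" where
  "col k c = restrict (\<lambda>i. rho T \<gamma> s (c div N^(k-1-i) mod N)) {..<k}"

lemma N_pos: "N > 0"
proof -
  have "q > 0" using len_T by linarith
  then show ?thesis by simp
qed

lemma card_Ak: "card (Ak k) = N ^ k"
  by (simp add: card_PiE card_UNIV)

lemma col_bij: "bij_betw (col k) {..<N^k} (Ak k)"
proof -
  have inj: "inj_on (col k) {..<N^k}"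
  proof
    fix c c' assume c: "c \<in> {..<N^k}" "c' \<in> {..<N^k}" and eq: "col k c = col k c'"
    have "\<forall>m<k. c div N^m mod N = c' div N^m mod N"
    proof (intro allI impI)
      fix m assume m: "m < k"
      have "col k c (k - 1 - m) = col k c' (k - 1 - m)" using eq by simp
      moreover have "k - 1 - (k - 1 - m) = m" using m by simp
      ultimately have "rho T \<gamma> s (c div N^m mod N) = rho T \<gamma> s (c' div N^m mod N)"
        using m unfolding col_def by simp
      then show "c div N^m mod N = c' div N^m mod N"
        using rho_inj N_pos unfolding inj_on_def by simp
    qed
    then show "c = c'" using base_inj[OF N_pos] c by simp
  qed
  have sub: "col k ` {..<N^k} \<subseteq> Ak k" unfolding col_def image_subset_iff restrict_PiE_iff by simp
  have "card (col k ` {..<N^k}) = card (Ak k)" using card_image[OF inj] card_Ak by simp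
  then have "col k ` {..<N^k} = Ak k" using sub by (intro card_subset_eq) (auto simp: finite_PiE)
  then show ?thesis using inj by (simp add: bij_betw_def)
qed

definition cw :: "nat \<Rightarrow> (nat \<Rightarrow> 'a) \<Rightarrow> 'a list" where
  "cw k a = map (\<lambda>c. \<Sum>i<k. a i * Gmat (rho T \<gamma> s) N k i c) [0..<N^k]"

lemma code_eq: "simplex_alpha_code T \<gamma> s k = range (cw k)"
  unfolding simplex_alpha_code_def row_code_def cw_def by (auto simp: power_mult)

lemma hw: "hamming_wt (cw k a) = card {x \<in> Ak k. (\<Sum>i<k. a i * x i) \<noteq> 0}"
proof -
  have "hamming_wt (cw k a) = card {c. c < N^k \<and> (\<Sum>i<k. a i * Gmat (rho T \<gamma> s) N k i c) \<noteq> 0}"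
    unfolding hamming_wt_def cw_def length_filter_conv_card
    by (intro arg_cong[where f=card] Collect_cong) auto
  also have "{c. c < N^k \<and> (\<Sum>i<k. a i * Gmat (rho T \<gamma> s) N k i c) \<noteq> 0}
      = {c \<in> {..<N^k}. (\<Sum>i<k. a i * col k c i) \<noteq> 0}"
  proof -
    have "(\<Sum>i<k. a i * Gmat (rho T \<gamma> s) N k i c) = (\<Sum>i<k. a i * col k c i)" if "c < N^k" for c
      by (intro sum.cong refl) (simp add: col_def Gmat_col[OF N_pos _ that])
    then show ?thesis by auto
  qed
  also have "card \<dots> = card {x \<in> Ak k. (\<Sum>i<k. a i * x i) \<noteq> 0}"
    by (rule bij_card_filter[OF col_bij])
  finally show ?thesis .
qed

end


lemma step_exists: "P 0 \<Longrightarrow> \<not> P n \<Longrightarrow> \<exists>j<n. P j \<and> \<not> P (Suc j)"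
proof (induct n)
  case 0 then show ?case by simp
next
  case (Suc n)
  then show ?case by (cases "P n") (auto intro: less_SucI)
qed

context cr begin

lemma kernel_count:
  assumes j: "j < s" and a_in: "\<forall>i<k. a i \<in> I j" and i0: "i0 < k" "a i0 \<notin> I (Suc j)"
  shows "card {x \<in> Ak k. (\<Sum>i<k. a i * x i) = 0} = N^(k-1) * q^j"
proof -
  obtain u v where uv: "a i0 = \<gamma>^j * u" "u * v = 1" using I_unit[of "a i0" j] a_in i0 by blast
  have "\<forall>i. \<exists>y. i < k \<longrightarrow> a i = \<gamma>^j * y" using a_in I_iff by blast
  then obtain b where b: "\<forall>i. i < k \<longrightarrow> a i = \<gamma>^j * b i" by metis
  define D where "D = {..<k} - {i0}"
  define Y where "Y = PiE D (\<lambda>_. UNIV::'a set)"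
  define Z where "Z = {x \<in> Ak k. (\<Sum>i<k. a i * x i) = 0}"
  have sumeq: "(\<Sum>i<k. a i * x i) = \<gamma>^j * (u * x i0 + (\<Sum>i\<in>D. b i * x i))" for x
  proof -
    have "(\<Sum>i<k. a i * x i) = a i0 * x i0 + (\<Sum>i\<in>D. a i * x i)"
      unfolding D_def using i0 by (simp add: sum.remove)
    also have "(\<Sum>i\<in>D. a i * x i) = (\<Sum>i\<in>D. \<gamma>^j * (b i * x i))"
      using b by (intro sum.cong refl) (auto simp: D_def mult.assoc)
    finally show ?thesis using uv by (simp add: sum_distrib_left[symmetric] distrib_left mult.assoc)
  qed
  have fib: "card {x \<in> Z. restrict x D = y} = q^j" if y: "y \<in> Y" for y
  proof -
    define S where "S = (\<Sum>i\<in>D. b i * y i)"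
    define F where "F = {x \<in> Z. restrict x D = y}"
    define G where "G = {t. u * t + S \<in> I (s - j)}"
    have bij1: "bij_betw (\<lambda>t. y(i0 := t)) G F"
    proof (rule bij_betw_imageI)
      show "inj_on (\<lambda>t. y(i0 := t)) G" by (rule inj_onI) (metis fun_upd_same)
      show "(\<lambda>t. y(i0 := t)) ` G = F"
      proof (intro equalityI subsetI)
        fix x assume "x \<in> (\<lambda>t. y(i0 := t)) ` G"
        then obtain t where t: "t \<in> G" "x = y(i0 := t)" by blast
        have yo: "y i = undefined" if "i \<notin> D" for i using y that by (auto simp: Y_def PiE_def extensional_def)
        have xA: "x \<in> Ak k" using t i0 yo by (auto simp: PiE_iff extensional_def D_def)
        have rx: "restrict x D = y" using t yo by (auto simp: fun_eq_iff D_def)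
        have "(\<Sum>i\<in>D. b i * x i) = S" unfolding S_def using t by (intro sum.cong refl) (auto simp: D_def)
        then have "(\<Sum>i<k. a i * x i) = \<gamma>^j * (u * t + S)" using sumeq[of x] t by simp
        also have "\<dots> = 0" using t(1) ann[of j "u * t + S"] j by (simp add: G_def)
        finally show "x \<in> F" using xA rx by (simp add: F_def Z_def)
      next
        fix x assume x: "x \<in> F"
        then have xA: "x \<in> Ak k" and rx: "restrict x D = y" and z: "(\<Sum>i<k. a i * x i) = 0"
          by (auto simp: F_def Z_def)
        have "x = y(i0 := x i0)"
        proof
          fix i show "x i = (y(i0 := x i0)) i"
          proof (cases "i = i0")
            case False
            then show ?thesis using rx xA by (cases "i \<in> D") (auto simp: D_def PiE_def extensional_def)
          qed simp
        qed
        moreover have "(\<Sum>i\<in>D. b i * x i) = S" unfolding S_def using rx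
          by (intro sum.cong refl) auto
        then have "x i0 \<in> G" using z sumeq[of x] ann[of j] j by (simp add: G_def)
        ultimately show "x \<in> (\<lambda>t. y(i0 := t)) ` G" by blast
      qed
    qed
    have bij2: "bij_betw (\<lambda>t. u * t + S) G (I (s - j))"
    proof (rule bij_betw_imageI)
      show "inj_on (\<lambda>t. u * t + S) G"
      proof (rule inj_onI)
        fix t t' assume "u * t + S = u * t' + S"
        then have "v * (u * t) = v * (u * t')" by simp
        then show "t = t'" using uv(2) by (simp add: mult.assoc[symmetric] mult.commute[of v u])
      qed
      show "(\<lambda>t. u * t + S) ` G = I (s - j)"
      proof (intro equalityI subsetI)
        fix w assume w: "w \<in> I (s - j)"
        have "u * (v * (w - S)) + S = w" using uv(2) by (simp add: mult.assoc[symmetric])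
        then show "w \<in> (\<lambda>t. u * t + S) ` G" using w unfolding G_def by (metis (mono_tags, lifting) image_eqI mem_Collect_eq)
      qed (auto simp: G_def)
    qed
    have "card F = card G" using bij1 by (simp add: bij_betw_same_card)
    also have "\<dots> = card (I (s - j))" using bij2 by (simp add: bij_betw_same_card)
    also have "\<dots> = q^j" using card_I[of "s - j"] j by simp
    finally show ?thesis unfolding F_def .
  qed
  have "card Z = (\<Sum>y\<in>Y. card {x \<in> Z. restrict x D = y})"
  proof -
    have "restrict x D \<in> Y" for x by (simp add: Y_def)
    then have sub: "(\<lambda>x. restrict x D) ` Z \<subseteq> Y" by blast
    have finZ: "finite Z" unfolding Z_def by (rule finite_subset[of _ "Ak k"]) (auto intro: finite_PiE)
    have finY: "finite Y" unfolding Y_def D_def by (intro finite_PiE) auto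
    have "(\<Sum>y\<in>Y. \<Sum>x\<in>{x. x \<in> Z \<and> restrict x D = y}. (1::nat)) = (\<Sum>x\<in>Z. 1)"
      by (rule sum.group[OF finZ finY sub])
    then show ?thesis by simp
  qed
  also have "\<dots> = card Y * q^j" using fib by simp
  also have "card Y = N^(k-1)" unfolding Y_def D_def using i0 by (simp add: card_PiE card_UNIV)
  finally show ?thesis unfolding Z_def .
qed

definition nz :: "nat \<Rightarrow> (nat \<Rightarrow> 'a) \<Rightarrow> nat" where
  "nz k a = card {x \<in> Ak k. (\<Sum>i<k. a i * x i) \<noteq> 0}"

definition Lev :: "nat \<Rightarrow> nat \<Rightarrow> (nat \<Rightarrow> 'a) set" where
  "Lev k j = PiE {..<k} (\<lambda>_. I j) - PiE {..<k} (\<lambda>_. I (Suc j))"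

lemma nz_Lev: "j < s \<Longrightarrow> a \<in> Lev k j \<Longrightarrow> nz k a = q^(s*k) - q^(s*(k-1)+j)"
proof -
  assume j: "j < s" and a: "a \<in> Lev k j"
  have a_in: "\<forall>i<k. a i \<in> I j" using a by (auto simp: Lev_def PiE_iff)
  obtain i0 where i0: "i0 < k" "a i0 \<notin> I (Suc j)" using a by (auto simp: Lev_def PiE_iff)
  define Z where "Z = {x \<in> Ak k. (\<Sum>i<k. a i * x i) = 0}"
  have "{x \<in> Ak k. (\<Sum>i<k. a i * x i) \<noteq> 0} = Ak k - Z" by (auto simp: Z_def)
  then have "nz k a = card (Ak k) - card Z"
    unfolding nz_def by (simp add: card_Diff_subset Z_def finite_PiE)
  also have "card Z = N^(k-1) * q^j" unfolding Z_def by (rule kernel_count[OF j a_in i0])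
  finally show ?thesis by (simp add: card_Ak power_mult[symmetric] power_add)
qed

lemma card_Lev: "j < s \<Longrightarrow> card (Lev k j) = q^(k*(s-j)) - q^(k*(s-j-1))"
proof -
  assume j: "j < s"
  have sub: "PiE {..<k} (\<lambda>_. I (Suc j)) \<subseteq> PiE {..<k} (\<lambda>_. I j)"
    using I_mono[of j "Suc j"] by (auto simp: PiE_iff)
  have "card (Lev k j) = card (PiE {..<k} (\<lambda>_. I j)) - card (PiE {..<k} (\<lambda>_. I (Suc j)))"
    unfolding Lev_def using sub by (simp add: card_Diff_subset finite_PiE)
  also have "\<dots> = (q^(s-j))^k - (q^(s - Suc j))^k" using j by (simp add: card_PiE card_I)
  finally show ?thesis by (simp add: power_mult[symmetric] mult.commute)
qed

lemma zero_I: "0 \<in> I j" using I_iff[of 0 j] by (metis mult_zero_right)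

abbreviation z0 :: "nat \<Rightarrow> nat \<Rightarrow> 'a" where "z0 k \<equiv> restrict (\<lambda>_. 0) {..<k}"

lemma Ak_decomp: "Ak k = insert (z0 k) (\<Union>j<s. Lev k j)"
proof (intro equalityI subsetI)
  fix a assume a: "a \<in> Ak k"
  show "a \<in> insert (z0 k) (\<Union>j<s. Lev k j)"
  proof (cases "a = z0 k")
    case False
    have "\<exists>i<k. a i \<noteq> 0"
    proof (rule ccontr)
      assume "\<not> (\<exists>i<k. a i \<noteq> 0)"
      then have "a = z0 k" using a by (auto simp: PiE_iff extensional_def fun_eq_iff)
      with False show False ..
    qed
    then obtain i where i: "i < k" "a i \<noteq> 0" by blast
    define P where "P j = (\<forall>i<k. a i \<in> I j)" for j
    have "P 0" by (simp add: P_def I_0)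
    moreover have "\<not> P s" using i by (auto simp: P_def I_s)
    ultimately obtain j where "j < s" "P j" "\<not> P (Suc j)" using step_exists[of P s] by blast
    then have "a \<in> Lev k j" using a by (auto simp: Lev_def P_def PiE_iff)
    then show ?thesis using \<open>j < s\<close> by blast
  qed simp
next
  fix a assume "a \<in> insert (z0 k) (\<Union>j<s. Lev k j)"
  then show "a \<in> Ak k" by (auto simp: Lev_def PiE_iff)
qed

lemma Lev_disj: "j < j' \<Longrightarrow> Lev k j \<inter> Lev k j' = {}"
  using I_mono[of "Suc j" j'] by (auto simp: Lev_def PiE_iff)

lemma z0_notin: "z0 k \<notin> Lev k j" using zero_I by (auto simp: Lev_def PiE_iff)

lemma sum_Ak: "(\<Sum>a\<in>Ak k. h (nz k a)) = h (nz k (z0 k)) + (\<Sum>j<s. real (card (Lev k j)) * h (q^(s*k) - q^(s*(k-1)+j)))"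
  for h :: "nat \<Rightarrow> real"
proof -
  have fin: "finite (Lev k j)" for j by (simp add: Lev_def finite_PiE)
  have "(\<Sum>a\<in>Ak k. h (nz k a)) = h (nz k (z0 k)) + (\<Sum>a\<in>(\<Union>j<s. Lev k j). h (nz k a))"
    unfolding Ak_decomp using z0_notin fin by (subst sum.insert) auto
  also have "(\<Sum>a\<in>(\<Union>j<s. Lev k j). h (nz k a)) = (\<Sum>j<s. \<Sum>a\<in>Lev k j. h (nz k a))"
  proof (rule sum.UNION_disjoint)
    show "\<forall>i\<in>{..<s}. \<forall>j\<in>{..<s}. i \<noteq> j \<longrightarrow> Lev k i \<inter> Lev k j = {}"
      using Lev_disj by (metis inf_commute nat_neq_iff)
  qed (use fin in auto)
  also have "\<dots> = (\<Sum>j<s. real (card (Lev k j)) * h (q^(s*k) - q^(s*(k-1)+j)))"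
    by (intro sum.cong refl) (simp add: nz_Lev)
  finally show ?thesis .
qed

end


context cr begin

lemma cw_restrict: "cw k a = cw k (restrict a {..<k})"
  unfolding cw_def by (intro map_cong refl sum.cong) auto

lemma cw_nth: "c < N^k \<Longrightarrow> cw k a ! c = (\<Sum>i<k. a i * col k c i)"
  unfolding cw_def by (auto intro!: sum.cong simp: col_def Gmat_col[OF N_pos])

lemma cw_inj: "inj_on (cw k) (Ak k)"
proof
  fix a b assume a: "a \<in> Ak k" and b: "b \<in> Ak k" and eq: "cw k a = cw k b"
  show "a = b"
  proof (rule PiE_ext[OF a b])
    fix i1 assume i1: "i1 \<in> {..<k}"
    define e where "e = restrict (\<lambda>i. if i = i1 then 1 else (0::'a)) {..<k}"
    have "e \<in> Ak k" by (simp add: e_def)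
    then have "e \<in> col k ` {..<N^k}" using col_bij unfolding bij_betw_def by simp
    then obtain c where c0: "c \<in> {..<N^k}" "col k c = e" by blast
    then have c: "c < N^k" "col k c = e" by auto
    have ev: "cw k f ! c = f i1" for f
    proof -
      have "cw k f ! c = (\<Sum>i<k. f i * e i)" using cw_nth[OF c(1)] unfolding c(2) .
      also have "\<dots> = (\<Sum>i<k. if i = i1 then f i else 0)"
        by (intro sum.cong refl) (simp add: e_def)
      also have "\<dots> = f i1" using i1 by (simp add: sum.delta)
      finally show ?thesis .
    qed
    have "cw k a ! c = a i1" "cw k b ! c = b i1" using ev by auto
    then show "a i1 = b i1" using eq by simp
  qed
qed

lemma code_img: "simplex_alpha_code T \<gamma> s k = cw k ` Ak k"
proof -
  have "range (cw k) = cw k ` Ak k"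
  proof (intro equalityI subsetI)
    fix w assume "w \<in> range (cw k)"
    then obtain a where "w = cw k a" by blast
    then have "w = cw k (restrict a {..<k})" using cw_restrict by simp
    moreover have "restrict a {..<k} \<in> Ak k" by simp
    ultimately show "w \<in> cw k ` Ak k" by blast
  qed auto
  then show ?thesis using code_eq by simp
qed

lemma wt_count_eq: "wt_count (simplex_alpha_code T \<gamma> s k) i = card {a \<in> Ak k. nz k a = i}"
proof -
  have "{c \<in> cw k ` Ak k. hamming_wt c = i} = cw k ` {a \<in> Ak k. nz k a = i}"
    using hw unfolding nz_def by auto
  moreover have "inj_on (cw k) {a \<in> Ak k. nz k a = i}" using cw_inj by (rule inj_on_subset) auto
  ultimately show ?thesis unfolding wt_count_def code_img by (simp add: card_image)
qed

lemma main:
  "weight_enumerator (simplex_alpha_code T \<gamma> s k) (q^(s*k)) X Y =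
       (\<Sum>j<s. real (q ^ (k * (s - j)) - q ^ (k * (s - j - 1)))
                * X ^ (q ^ (s * k) - (q ^ (s * k) - q ^ (s * (k - 1) + j)))
                * Y ^ (q ^ (s * k) - q ^ (s * (k - 1) + j)))
       + X ^ (q ^ (s * k))"
proof -
  define n where "n = q^(s*k)"
  define g where "g i = X^(n - i) * Y^i" for i
  have finA: "finite (Ak k)" by (simp add: finite_PiE)
  have le: "nz k a \<le> n" if "a \<in> Ak k" for a
  proof -
    have "nz k a \<le> card (Ak k)" unfolding nz_def using finA by (intro card_mono) auto
    then show ?thesis by (simp add: card_Ak n_def power_mult)
  qed
  have "weight_enumerator (simplex_alpha_code T \<gamma> s k) n X Y
      = (\<Sum>i\<in>{..n}. \<Sum>a\<in>{a. a \<in> Ak k \<and> nz k a = i}. g (nz k a))"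
    unfolding weight_enumerator_def wt_count_eq g_def by (intro sum.cong refl) simp
  also have "\<dots> = (\<Sum>a\<in>Ak k. g (nz k a))"
    using le by (intro sum.group finA) auto
  also have "\<dots> = g (nz k (z0 k)) + (\<Sum>j<s. real (card (Lev k j)) * g (q^(s*k) - q^(s*(k-1)+j)))"
    by (rule sum_Ak)
  also have "nz k (z0 k) = 0" unfolding nz_def by simp
  also have "(\<Sum>j<s. real (card (Lev k j)) * g (q^(s*k) - q^(s*(k-1)+j)))
     = (\<Sum>j<s. real (q ^ (k * (s - j)) - q ^ (k * (s - j - 1)))
                * X ^ (q ^ (s * k) - (q ^ (s * k) - q ^ (s * (k - 1) + j)))
                * Y ^ (q ^ (s * k) - q ^ (s * (k - 1) + j)))"
    by (intro sum.cong refl) (simp add: card_Lev g_def n_def mult.assoc)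
  finally show ?thesis by (simp add: g_def n_def add.commute)
qed

end

theorem theorem3p13:
  fixes \<gamma> :: "'a::{comm_ring_1,finite}" and s k :: nat and T :: "'a list"
  assumes chain: "\<And>I J :: 'a set. is_ideal I \<Longrightarrow> is_ideal J \<Longrightarrow> I \<subseteq> J \<or> J \<subseteq> I"
    and maxid: "maximal_ideal (pideal \<gamma>)"
    and nilp: "\<gamma> ^ s = 0" "\<forall>n<s. \<gamma> ^ n \<noteq> 0"
    and T_dist: "distinct T"
    and T_reps: "\<forall>r::'a. \<exists>!t. t \<in> set T \<and> r - t \<in> pideal \<gamma>"
    and T0: "T ! 0 = 0" and T1: "T ! 1 = 1"
    and k: "k \<ge> 1"
  shows "\<forall>X Y :: real.
     weight_enumerator (simplex_alpha_code T \<gamma> s k) ((length T) ^ (s * k)) X Y =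
       (\<Sum>j<s. real ((length T) ^ (k * (s - j)) - (length T) ^ (k * (s - j - 1)))
                * X ^ ((length T) ^ (s * k) - ((length T) ^ (s * k) - (length T) ^ (s * (k - 1) + j)))
                * Y ^ ((length T) ^ (s * k) - (length T) ^ (s * (k - 1) + j)))
       + X ^ ((length T) ^ (s * k))"
proof -
  interpret cr \<gamma> s T
    using chain maxid nilp T_dist T_reps T0 by unfold_locales auto
  show ?thesis using main by blast
qed

end
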